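(* Let $X$, $Y$, $\mathcal{E}$ be Euclidean-space-valued random variables on a probability space $(\Omega,\mathcal{F},P)$, and let $\Phi$ be a random variable measurable with respect to $\sigma(X)$. Let $\mathcal{E}_\phi\in\sigma(\mathcal{E})$ and $\mathcal{E}_\psi$ be as described in the context. If $\Phi\in\mathcal{I}$, then $\mathcal{E}_\psi$ is conditionally independent of $(\Phi,Y)$ given $\mathcal{E}_\phi$.
   Context: $\mathcal{E}_\phi$ denotes a minimal (with respect to generated $\sigma$-algebras) random variable measurable with respect to $\sigma(\mathcal{E})$ such that $\Phi$ is conditionally independent of $\mathcal{E}$ given $\mathcal{E}_\phi$ (so $P(\Phi\mid\mathcal{E})=P(\Phi\mid\mathcal{E}_\phi)$). It is assumed that there is a random variable $\mathcal{E}_\psi$, independent of $\mathcal{E}_\phi$, with $\sigma(\mathcal{E})=\sigma(\mathcal{E}_\phi,\mathcal{E}_\psi)$; accordingly each realization $\epsilon\in\mathrm{supp}(\mathcal{E})$ is written $\epsilon=(\epsilon_\phi,\epsilon_\psi)$. The set of invariant features is $\mathcal{I}=\{\Phi\in\sigma(X): p(Y\mid\Phi,\epsilon)=p(Y\mid\Phi)\ \text{for all }\epsilon\in\mathrm{supp}(\mathcal{E})\}$, assumed non-empty. *)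

theory Defs
  imports "HOL-Probability.Probability"
begin

definition sigma_rv :: "'a measure \<Rightarrow> ('a \<Rightarrow> 'b) \<Rightarrow> 'b measure \<Rightarrow> 'a measure" where
  "sigma_rv M Z N = vimage_algebra (space M) Z N"

definition cond_prob :: "'a measure \<Rightarrow> 'a measure \<Rightarrow> ('a \<Rightarrow> 'b) \<Rightarrow> 'b set \<Rightarrow> 'a \<Rightarrow> real" where
  "cond_prob M F Z S = real_cond_exp M F (\<lambda>\<omega>. indicator S (Z \<omega>))"

definition same_cond_law ::
  "'a measure \<Rightarrow> 'a measure \<Rightarrow> 'a measure \<Rightarrow> ('a \<Rightarrow> 'b) \<Rightarrow> 'b measure \<Rightarrow> bool" where
  "same_cond_law M F G Z N \<longleftrightarrow>
     (\<forall>S\<in>sets N. AE \<omega> in M. cond_prob M F Z S \<omega> = cond_prob M G Z S \<omega>)"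

definition cond_indep ::
  "'a measure \<Rightarrow> ('a \<Rightarrow> 'b) \<Rightarrow> 'b measure \<Rightarrow> ('a \<Rightarrow> 'c) \<Rightarrow> 'c measure \<Rightarrow> 'a measure \<Rightarrow> bool" where
  "cond_indep M A NA B NB F \<longleftrightarrow>
     (\<forall>S\<in>sets NA. \<forall>T\<in>sets NB. AE \<omega> in M.
        real_cond_exp M F (\<lambda>\<omega>. indicator S (A \<omega>) * indicator T (B \<omega>)) \<omega>
        = cond_prob M F A S \<omega> * cond_prob M F B T \<omega>)"

definition invariant_feature ::
  "'a measure \<Rightarrow> ('a \<Rightarrow> 'x::euclidean_space) \<Rightarrow> ('a \<Rightarrow> 'y::euclidean_space)
   \<Rightarrow> ('a \<Rightarrow> 'e::euclidean_space) \<Rightarrow> ('a \<Rightarrow> 'f) \<Rightarrow> 'f measure \<Rightarrow> bool" where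
  "invariant_feature M X Y E Phi NF \<longleftrightarrow>
     Phi \<in> measurable (sigma_rv M X borel) NF \<and>
     same_cond_law M (sigma_rv M (\<lambda>\<omega>. (Phi \<omega>, E \<omega>)) (NF \<Otimes>\<^sub>M borel))
                     (sigma_rv M Phi NF) Y borel"

text \<open>Minimality is expressed over all
  sub-sigma-algebras G of sigma(E) (every such G is generated by a random variable,
  namely the identity onto (space M, G)).\<close>
definition minimal_env_part ::
  "'a measure \<Rightarrow> ('a \<Rightarrow> 'e::euclidean_space) \<Rightarrow> ('a \<Rightarrow> 'f) \<Rightarrow> 'f measure
   \<Rightarrow> ('a \<Rightarrow> 'p) \<Rightarrow> 'p measure \<Rightarrow> bool" where
  "minimal_env_part M E Phi NF Ephi NP \<longleftrightarrow>
     Ephi \<in> measurable (sigma_rv M E borel) NP \<and>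
     same_cond_law M (sigma_rv M E borel) (sigma_rv M Ephi NP) Phi NF \<and>
     (\<forall>G. space G = space M \<and> sets G \<subseteq> sets (sigma_rv M E borel) \<and>
          same_cond_law M (sigma_rv M E borel) G Phi NF
          \<longrightarrow> \<not> (sets G \<subset> sets (sigma_rv M Ephi NP)))"

end

theory Submission imports Defs begin

lemma prob_sfs:
  assumes "prob_space M" "subalgebra M F"
  shows "sigma_finite_subalgebra M F"
proof -
  interpret prob_space M by fact
  have "finite_measure_subalgebra M F"
    by unfold_locales (use assms(2) in auto)
  then show ?thesis by (rule finite_measure_subalgebra_is_sigma_finite)
qed

lemma subalg_vimage:
  assumes "Z \<in> measurable M N"
  shows "subalgebra M (sigma_rv M Z N)"
  unfolding subalgebra_def sigma_rv_def
  using assms by (auto simp: sets_vimage_algebra2 measurable_def)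

lemma (in finite_measure) integrable_bdd_mult:
  fixes f g :: "'a \<Rightarrow> real"
  assumes "integrable M f" "g \<in> borel_measurable M" "\<And>x. x \<in> space M \<Longrightarrow> \<bar>g x\<bar> \<le> c"
  shows "integrable M (\<lambda>x. g x * f x)"
proof (rule Bochner_Integration.integrable_bound[of _ "\<lambda>x. c * f x"])
  show "integrable M (\<lambda>x. c * f x)" using assms(1) by simp
  show "(\<lambda>x. g x * f x) \<in> borel_measurable M" using assms by measurable
  show "AE x in M. norm (g x * f x) \<le> norm (c * f x)"
  proof (rule AE_I2)
    fix x assume "x \<in> space M"
    then have "\<bar>g x\<bar> \<le> c" by (rule assms(3))
    then show "norm (g x * f x) \<le> norm (c * f x)"
      by (simp add: abs_mult mult_right_mono)
  qed
qed

lemma (in prob_space) indep_ce: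
  assumes "subalgebra M F" "B \<in> sets M" "\<And>C. C \<in> sets F \<Longrightarrow> prob (C \<inter> B) = prob C * prob B"
  shows "AE x in M. real_cond_exp M F (indicator B) x = prob B"
proof -
  interpret sigma_finite_subalgebra M F using prob_sfs[OF prob_space_axioms assms(1)] .
  show ?thesis
  proof (rule real_cond_exp_charact)
    fix C assume C: "C \<in> sets F"
    then have CM: "C \<in> sets M" using assms(1) by (auto simp: subalgebra_def)
    have "(\<integral>x\<in>C. indicator B x \<partial>M) = (\<integral>x. indicator (C \<inter> B) x \<partial>M)"
      unfolding set_lebesgue_integral_def by (intro Bochner_Integration.integral_cong) (auto split: split_indicator)
    also have "\<dots> = prob (C \<inter> B)" using CM assms(2) by simp
    also have "\<dots> = prob C * prob B" using assms(3) C by simp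
    also have "\<dots> = (\<integral>x\<in>C. prob B \<partial>M)" using CM unfolding set_lebesgue_integral_def by simp
    finally show "(\<integral>x\<in>C. indicator B x \<partial>M) = (\<integral>x\<in>C. prob B \<partial>M)" .
  qed (use assms(2) in \<open>auto intro!: integrable_real_indicator simp: less_top[symmetric]\<close>)
qed

lemma (in prob_space) indep_int:
  assumes "subalgebra M F" "B \<in> sets M" "\<And>C. C \<in> sets F \<Longrightarrow> prob (C \<inter> B) = prob C * prob B"
    and f: "f \<in> borel_measurable F" "integrable M f"
  shows "(\<integral>x. f x * indicator B x \<partial>M) = prob B * (\<integral>x. f x \<partial>M)"
proof -
  interpret sigma_finite_subalgebra M F using prob_sfs[OF prob_space_axioms assms(1)] .
  have fM: "f \<in> borel_measurable M" using f by auto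
  have int: "integrable M (\<lambda>x. f x * indicator B x)"
    using integrable_bdd_mult[OF f(2), of "indicator B" 1] assms(2)
    by (simp add: mult.commute)
  have "(\<integral>x. f x * indicator B x \<partial>M) = (\<integral>x. f x * real_cond_exp M F (indicator B) x \<partial>M)"
    using real_cond_exp_intg(2)[OF int f(1)] assms(2) by simp
  also have "\<dots> = (\<integral>x. f x * prob B \<partial>M)"
    using indep_ce[OF assms(1-3)] using fM by (intro integral_cong_AE) auto
  also have "\<dots> = prob B * (\<integral>x. f x \<partial>M)" by simp
  finally show ?thesis .
qed


lemma (in prob_space) int_ind:
  assumes "X \<in> events" "\<And>x. x \<in> space M \<Longrightarrow> f x = indicator X x"
  shows "(\<integral>x. f x \<partial>M) = prob X"
proof -
  have "(\<integral>x. f x \<partial>M) = (\<integral>x. indicator X x \<partial>M)"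
    using assms(2) by (intro Bochner_Integration.integral_cong) auto
  also have "\<dots> = prob X" using assms(1) by (simp add: Int_absorb2 sets.sets_into_space)
  finally show ?thesis .
qed

lemma (in prob_space) bdd_int:
  fixes f :: "'a \<Rightarrow> real"
  assumes "f \<in> borel_measurable M" "\<And>x. x \<in> space M \<Longrightarrow> \<bar>f x\<bar> \<le> 1"
  shows "integrable M f"
  using assms by (intro integrable_const_bound[where B=1]) auto

locale LL = prob_space M for M :: "'a measure" +
  fixes Fp FE FPhi G :: "'a measure" and Phi :: "'a \<Rightarrow> 'f" and NF :: "'f measure"
    and Y :: "'a \<Rightarrow> 'y::euclidean_space" and Epsi :: "'a \<Rightarrow> 'q" and NQ :: "'q measure"
  assumes subFp: "subalgebra M Fp" and subFE: "subalgebra M FE"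
    and subFPhi: "subalgebra M FPhi" and subG: "subalgebra M G"
    and Fp_FE: "sets Fp \<subseteq> sets FE" and FE_G: "sets FE \<subseteq> sets G"
    and Phi_G: "Phi \<in> measurable G NF" and Phi_FPhi: "Phi \<in> measurable FPhi NF"
    and FPhi_sets: "sets FPhi = {Phi -` S \<inter> space M | S. S \<in> sets NF}"
    and Y_M: "Y \<in> borel_measurable M"
    and Epsi_FE: "Epsi \<in> measurable FE NQ"
    and minE: "\<And>S. S \<in> sets NF \<Longrightarrow> AE x in M. real_cond_exp M FE (\<lambda>x. indicator S (Phi x)) x
                 = real_cond_exp M Fp (\<lambda>x. indicator S (Phi x)) x"
    and invY: "\<And>T. T \<in> sets borel \<Longrightarrow> AE x in M. real_cond_exp M G (\<lambda>x. indicator T (Y x)) x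
                 = real_cond_exp M FPhi (\<lambda>x. indicator T (Y x)) x"
    and indepE: "\<And>C U. C \<in> sets Fp \<Longrightarrow> U \<in> sets NQ \<Longrightarrow>
                 prob (C \<inter> (Epsi -` U \<inter> space M)) = prob C * prob (Epsi -` U \<inter> space M)"
begin

lemma Phi_M[measurable]: "Phi \<in> measurable M NF"
  using Phi_G subG by (rule measurable_from_subalg[rotated])

lemma Epsi_M[measurable]: "Epsi \<in> measurable M NQ"
  using Epsi_FE subFE by (rule measurable_from_subalg[rotated])

lemma sets_Fp_M: "A \<in> sets Fp \<Longrightarrow> A \<in> sets M"
  using subFp by (auto simp: subalgebra_def)

lemma step3:
  assumes A: "A \<in> sets Fp" and U: "U \<in> sets NQ" and S: "S \<in> sets NF"
  defines "B \<equiv> Epsi -` U \<inter> space M"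
  shows "(\<integral>x. indicator S (Phi x) * (indicator A x * indicator B x) \<partial>M)
         = prob B * (\<integral>x. indicator S (Phi x) * indicator A x \<partial>M)"
proof -
  interpret E: sigma_finite_subalgebra M FE using prob_sfs[OF prob_space_axioms subFE] .
  interpret P: sigma_finite_subalgebra M Fp using prob_sfs[OF prob_space_axioms subFp] .
  have AM[measurable]: "A \<in> sets M" using sets_Fp_M[OF A] .
  note [measurable] = S U
  have BM[measurable]: "B \<in> sets M" unfolding B_def by measurable
  have AFE: "A \<in> sets FE" using A Fp_FE by auto
  have BFE: "B \<in> sets FE" using measurable_sets[OF Epsi_FE U] subFE
    by (simp add: B_def subalgebra_def)
  define h where "h = real_cond_exp M FE (\<lambda>x. indicator S (Phi x))"
  define h' where "h' = real_cond_exp M Fp (\<lambda>x. indicator S (Phi x))"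
  have mAB: "(\<lambda>x. indicator A x * indicator B x :: real) \<in> borel_measurable FE"
    by (intro borel_measurable_times borel_measurable_indicator AFE BFE)
  have iAB: "integrable M (\<lambda>x. (indicator A x * indicator B x) * indicator S (Phi x) :: real)"
    by (rule bdd_int) (auto simp: indicator_def)
  have i1: "integrable M (\<lambda>x. indicator A x * h' x)"
    unfolding h'_def
    by (rule P.real_cond_exp_intg(1)) (auto intro!: bdd_int borel_measurable_indicator A split: split_indicator)
  have mh': "(\<lambda>x. h' x * indicator A x) \<in> borel_measurable Fp"
    unfolding h'_def by (intro borel_measurable_times borel_measurable_indicator A borel_measurable_cond_exp)
  have "(\<integral>x. indicator S (Phi x) * (indicator A x * indicator B x) \<partial>M)
      = (\<integral>x. (indicator A x * indicator B x) * indicator S (Phi x) \<partial>M :: real)"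
    by (intro arg_cong[where f="integral\<^sup>L M"] ext) (simp only: mult.assoc mult.commute mult.left_commute)
  also have "\<dots> = (\<integral>x. (indicator A x * indicator B x) * h x \<partial>M)"
    unfolding h_def using E.real_cond_exp_intg(2)[OF iAB mAB] by simp
  also have "\<dots> = (\<integral>x. (indicator A x * indicator B x) * h' x \<partial>M)"
    using minE[OF S] unfolding h_def h'_def
    by (intro integral_cong_AE) auto
  also have "\<dots> = (\<integral>x. (h' x * indicator A x) * indicator B x \<partial>M)"
    by (intro Bochner_Integration.integral_cong) auto
  also have "\<dots> = prob B * (\<integral>x. h' x * indicator A x \<partial>M)"
    by (rule indep_int[OF subFp BM _ mh']) (use indepE[OF _ U] i1 in \<open>auto simp: B_def mult.commute\<close>)
  also have "(\<integral>x. h' x * indicator A x \<partial>M) = (\<integral>x. indicator A x * h' x \<partial>M)"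
    by (simp add: mult.commute)
  also have "\<dots> = (\<integral>x. indicator A x * indicator S (Phi x) \<partial>M)"
    unfolding h'_def
    by (rule P.real_cond_exp_intg(2)) (auto intro!: bdd_int borel_measurable_indicator A split: split_indicator)
  also have "\<dots> = (\<integral>x. indicator S (Phi x) * indicator A x \<partial>M)"
    by (simp add: mult.commute)
  finally show ?thesis .
qed

lemma step3b:
  assumes A: "A \<in> sets Fp" and U: "U \<in> sets NQ"
  defines "B \<equiv> Epsi -` U \<inter> space M"
  shows "AE x in M. real_cond_exp M FPhi (\<lambda>x. indicator A x * indicator B x) x
           = prob B * real_cond_exp M FPhi (indicator A) x"
proof -
  interpret F: sigma_finite_subalgebra M FPhi using prob_sfs[OF prob_space_axioms subFPhi] .
  have AM[measurable]: "A \<in> sets M" using sets_Fp_M[OF A] .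
  note [measurable] = U
  have BM[measurable]: "B \<in> sets M" unfolding B_def by measurable
  have iA: "integrable M (indicator A :: _ \<Rightarrow> real)"
    by (rule bdd_int) (auto split: split_indicator)
  show ?thesis
  proof (rule F.real_cond_exp_charact)
    fix C assume "C \<in> sets FPhi"
    then obtain S where S: "S \<in> sets NF" and C: "C = Phi -` S \<inter> space M"
      using FPhi_sets by auto
    have "(\<integral>x\<in>C. indicator A x * indicator B x \<partial>M)
        = (\<integral>x. indicator S (Phi x) * (indicator A x * indicator B x) \<partial>M :: real)"
      unfolding set_lebesgue_integral_def C
      by (intro Bochner_Integration.integral_cong) (auto split: split_indicator)
    also have "\<dots> = prob B * (\<integral>x. indicator S (Phi x) * indicator A x \<partial>M)"
      unfolding B_def by (rule step3[OF A U S])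
    also have "(\<integral>x. indicator S (Phi x) * indicator A x \<partial>M) = (\<integral>x\<in>C. indicator A x \<partial>M :: real)"
      unfolding set_lebesgue_integral_def C
      by (intro Bochner_Integration.integral_cong) (auto split: split_indicator)
    also have "\<dots> = (\<integral>x\<in>C. real_cond_exp M FPhi (indicator A) x \<partial>M)"
      by (rule F.real_cond_exp_intA[OF iA \<open>C \<in> sets FPhi\<close>])
    also have "prob B * \<dots> = (\<integral>x\<in>C. prob B * real_cond_exp M FPhi (indicator A) x \<partial>M)"
      unfolding set_lebesgue_integral_def real_scaleR_def
      by (subst mult.left_commute) (rule integral_mult_right_zero[symmetric])
    finally show "(\<integral>x\<in>C. indicator A x * indicator B x \<partial>M)
        = (\<integral>x\<in>C. prob B * real_cond_exp M FPhi (indicator A) x \<partial>M)" .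
  next
    show "integrable M (\<lambda>x. indicator A x * indicator B x :: real)"
      by (rule bdd_int) (auto split: split_indicator)
    show "integrable M (\<lambda>x. prob B * real_cond_exp M FPhi (indicator A) x)"
      using F.real_cond_exp_int(1)[OF iA] by simp
    show "(\<lambda>x. prob B * real_cond_exp M FPhi (indicator A) x) \<in> borel_measurable FPhi"
      by measurable
  qed
qed

lemma B_FE: "U \<in> sets NQ \<Longrightarrow> Epsi -` U \<inter> space M \<in> sets FE"
  using measurable_sets[OF Epsi_FE, of U] subFE by (simp add: subalgebra_def)

lemma core:
  assumes A: "A \<in> sets Fp" and U: "U \<in> sets NQ" and S: "S \<in> sets NF" and T: "T \<in> sets borel"
  defines "B \<equiv> Epsi -` U \<inter> space M"
  shows "(\<integral>x. indicator A x * indicator B x * indicator S (Phi x) * indicator T (Y x) \<partial>M)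
         = prob B * (\<integral>x. indicator A x * indicator S (Phi x) * indicator T (Y x) \<partial>M)"
proof -
  interpret Gs: sigma_finite_subalgebra M G using prob_sfs[OF prob_space_axioms subG] .
  interpret F: sigma_finite_subalgebra M FPhi using prob_sfs[OF prob_space_axioms subFPhi] .
  have AM[measurable]: "A \<in> sets M" using sets_Fp_M[OF A] .
  note [measurable] = U S T Y_M
  have BM[measurable]: "B \<in> sets M" unfolding B_def by measurable
  have AG: "A \<in> sets G" using A Fp_FE FE_G by auto
  have BG: "B \<in> sets G" using B_FE[OF U] FE_G by (auto simp: B_def)
  define k where "k = real_cond_exp M FPhi (\<lambda>x. indicator T (Y x))"
  have iT: "integrable M (\<lambda>x. indicator T (Y x) :: real)"
    by (rule bdd_int) (auto split: split_indicator)
  have ik: "integrable M k" unfolding k_def using F.real_cond_exp_int(1)[OF iT] .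
  have mk: "k \<in> borel_measurable FPhi" unfolding k_def by measurable
  have mkM[measurable]: "k \<in> borel_measurable M" unfolding k_def by measurable
  have aux: "(\<integral>x. Z x * indicator T (Y x) \<partial>M) = (\<integral>x. Z x * k x \<partial>M)"
    if Z: "Z \<in> borel_measurable G" "\<And>x. x \<in> space M \<Longrightarrow> \<bar>Z x\<bar> \<le> 1" for Z
  proof -
    have ZM: "Z \<in> borel_measurable M" using measurable_from_subalg[OF subG Z(1)] .
    have iZ: "integrable M (\<lambda>x. Z x * indicator T (Y x))"
      using ZM Z(2) by (intro bdd_int) (auto split: split_indicator)
    have "(\<integral>x. Z x * indicator T (Y x) \<partial>M)
        = (\<integral>x. Z x * real_cond_exp M G (\<lambda>x. indicator T (Y x)) x \<partial>M)"
      using Gs.real_cond_exp_intg(2)[OF iZ Z(1)] by simp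
    also have "\<dots> = (\<integral>x. Z x * k x \<partial>M)"
      unfolding k_def using invY[OF T] ZM by (intro integral_cong_AE) auto
    finally show ?thesis .
  qed
  have mPhiG: "(\<lambda>x. indicator S (Phi x) :: real) \<in> borel_measurable G"
    by (rule measurable_compose[OF Phi_G borel_measurable_indicator[OF S]])
  have e1: "(\<integral>x. indicator A x * indicator B x * indicator S (Phi x) * indicator T (Y x) \<partial>M)
      = (\<integral>x. (indicator A x * indicator B x * indicator S (Phi x)) * k x \<partial>M)"
    by (rule aux) (auto intro!: borel_measurable_times borel_measurable_indicator AG BG mPhiG
        split: split_indicator)
  have e0: "(\<integral>x. indicator A x * indicator S (Phi x) * indicator T (Y x) \<partial>M)
      = (\<integral>x. (indicator A x * indicator S (Phi x)) * k x \<partial>M)"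
    by (rule aux) (auto intro!: borel_measurable_times borel_measurable_indicator AG mPhiG
        split: split_indicator)
  have mSk: "(\<lambda>x. indicator S (Phi x) * k x) \<in> borel_measurable FPhi"
    by (intro borel_measurable_times mk measurable_compose[OF Phi_FPhi borel_measurable_indicator[OF S]])
  have i1: "integrable M (\<lambda>x. (indicator S (Phi x) * k x) * (indicator A x * indicator B x))"
  proof -
    have "integrable M (\<lambda>x. (indicator S (Phi x) * (indicator A x * indicator B x)) * k x)"
      by (rule integrable_bdd_mult[OF ik]) (auto split: split_indicator)
    then show ?thesis by (simp add: ac_simps)
  qed
  have i0: "integrable M (\<lambda>x. (indicator S (Phi x) * k x) * indicator A x)"
  proof -
    have "integrable M (\<lambda>x. (indicator S (Phi x) * indicator A x) * k x)"
      by (rule integrable_bdd_mult[OF ik]) (auto split: split_indicator)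
    then show ?thesis by (simp add: ac_simps)
  qed
  have "(\<integral>x. (indicator A x * indicator B x * indicator S (Phi x)) * k x \<partial>M)
      = (\<integral>x. (indicator S (Phi x) * k x) * (indicator A x * indicator B x) \<partial>M)"
    by (intro arg_cong[where f="integral\<^sup>L M"] ext) (simp only: mult.assoc mult.commute mult.left_commute)
  also have "\<dots> = (\<integral>x. (indicator S (Phi x) * k x) *
       real_cond_exp M FPhi (\<lambda>x. indicator A x * indicator B x) x \<partial>M)"
    using F.real_cond_exp_intg(2)[OF i1 mSk] by simp
  also have "\<dots> = (\<integral>x. (indicator S (Phi x) * k x) *
       (prob B * real_cond_exp M FPhi (indicator A) x) \<partial>M)"
    apply (rule integral_cong_AE)
      apply (rule borel_measurable_times[OF measurable_from_subalg[OF subFPhi mSk] borel_measurable_cond_exp2])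
     apply (rule borel_measurable_times[OF measurable_from_subalg[OF subFPhi mSk]])
     apply (rule borel_measurable_times[OF borel_measurable_const borel_measurable_cond_exp2])
    using step3b[OF A U] unfolding B_def[symmetric] by auto
  also have "\<dots> = prob B * (\<integral>x. (indicator S (Phi x) * k x) * real_cond_exp M FPhi (indicator A) x \<partial>M)"
    by (subst integral_mult_right_zero[symmetric]) (simp add: ac_simps)
  also have "(\<integral>x. (indicator S (Phi x) * k x) * real_cond_exp M FPhi (indicator A) x \<partial>M)
      = (\<integral>x. (indicator S (Phi x) * k x) * indicator A x \<partial>M)"
    using F.real_cond_exp_intg(2)[OF i0 mSk] by simp
  also have "\<dots> = (\<integral>x. (indicator A x * indicator S (Phi x)) * k x \<partial>M)"
    by (intro arg_cong[where f="integral\<^sup>L M"] ext) (simp only: mult.assoc mult.commute mult.left_commute)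
  finally show ?thesis using e1 e0 by simp
qed

lemma dyn:
  assumes A: "A \<in> sets Fp" and U: "U \<in> sets NQ" and W: "W \<in> sets (NF \<Otimes>\<^sub>M borel)"
  defines "B \<equiv> Epsi -` U \<inter> space M"
  shows "prob (A \<inter> B \<inter> ((\<lambda>x. (Phi x, Y x)) -` W \<inter> space M))
         = prob B * prob (A \<inter> ((\<lambda>x. (Phi x, Y x)) -` W \<inter> space M))"
proof -
  have AM[measurable]: "A \<in> sets M" using sets_Fp_M[OF A] .
  note [measurable] = U Y_M
  have BM[measurable]: "B \<in> sets M" unfolding B_def by measurable
  have PYm: "(\<lambda>x. (Phi x, Y x)) \<in> measurable M (NF \<Otimes>\<^sub>M borel)" by measurable
  have AB: "prob (A \<inter> B) = prob A * prob B" unfolding B_def by (rule indepE[OF A U])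
  have W': "W \<in> sigma_sets (space NF \<times> space borel) {a \<times> b | a b. a \<in> sets NF \<and> b \<in> sets borel}"
    using W by (simp add: sets_pair_measure)
  from Int_stable_pair_measure_generator pair_measure_closed W'
  show ?thesis
  proof (induct rule: sigma_sets_induct_disjoint)
    case (basic W)
    then obtain a b where W: "W = a \<times> b" and a: "a \<in> sets NF" and b: "b \<in> sets borel" by auto
    note [measurable] = a b
    have "prob (A \<inter> B \<inter> ((\<lambda>x. (Phi x, Y x)) -` W \<inter> space M))
        = (\<integral>x. indicator A x * indicator B x * indicator a (Phi x) * indicator b (Y x) \<partial>M)"
      unfolding W by (rule int_ind[symmetric]) (auto split: split_indicator)
    also have "\<dots> = prob B * (\<integral>x. indicator A x * indicator a (Phi x) * indicator b (Y x) \<partial>M)"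
      unfolding B_def by (rule core[OF A U a b])
    also have "(\<integral>x. indicator A x * indicator a (Phi x) * indicator b (Y x) \<partial>M)
        = prob (A \<inter> ((\<lambda>x. (Phi x, Y x)) -` W \<inter> space M))"
      unfolding W by (rule int_ind) (auto split: split_indicator)
    finally show ?case .
  next
    case empty
    then show ?case by simp
  next
    case (compl W)
    let ?X = "(\<lambda>x. (Phi x, Y x)) -` W \<inter> space M"
    have "W \<in> sets (NF \<Otimes>\<^sub>M borel)" using compl(1) by (simp add: sets_pair_measure)
    then have X: "?X \<in> events" using PYm by (rule measurable_sets[rotated])
    have PYsp: "\<And>x. x \<in> space M \<Longrightarrow> Phi x \<in> space NF"
      using Phi_M by (auto simp: measurable_def)
    have eq: "(\<lambda>x. (Phi x, Y x)) -` (space NF \<times> space borel - W) \<inter> space M = space M - ?X"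
      using PYsp by auto
    have sA: "A \<subseteq> space M" using AM by (rule sets.sets_into_space)
    have "prob (A \<inter> B \<inter> (space M - ?X)) = prob ((A \<inter> B) - ?X)"
      using sA by (intro arg_cong[where f=prob]) auto
    also have "\<dots> = prob (A \<inter> B) - prob (A \<inter> B \<inter> ?X)"
      using X by (intro finite_measure_Diff') auto
    finally have e1: "prob (A \<inter> B \<inter> (space M - ?X)) = prob (A \<inter> B) - prob (A \<inter> B \<inter> ?X)" .
    have "prob (A \<inter> (space M - ?X)) = prob (A - ?X)"
      using sA by (intro arg_cong[where f=prob]) auto
    also have "\<dots> = prob A - prob (A \<inter> ?X)"
      using X by (intro finite_measure_Diff') auto
    finally have e0: "prob (A \<inter> (space M - ?X)) = prob A - prob (A \<inter> ?X)" .
    show ?case unfolding eq e1 e0 AB compl(2) by (simp add: algebra_simps)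
  next
    case (union F)
    let ?X = "\<lambda>i. (\<lambda>x. (Phi x, Y x)) -` F i \<inter> space M"
    have Fs: "\<And>i. F i \<in> sets (NF \<Otimes>\<^sub>M borel)" using union(2) by (auto simp: sets_pair_measure)
    have X: "\<And>i. ?X i \<in> events" using PYm Fs by (blast intro: measurable_sets)
    have s1: "(\<lambda>i. prob (A \<inter> B \<inter> ?X i)) sums prob (\<Union>i. A \<inter> B \<inter> ?X i)"
      using X union(1) by (intro finite_measure_UNION) (auto simp: disjoint_family_on_def)
    have s0: "(\<lambda>i. prob (A \<inter> ?X i)) sums prob (\<Union>i. A \<inter> ?X i)"
      using X union(1) by (intro finite_measure_UNION) (auto simp: disjoint_family_on_def)
    have s0': "(\<lambda>i. prob B * prob (A \<inter> ?X i)) sums (prob B * prob (\<Union>i. A \<inter> ?X i))"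
      by (rule sums_mult[OF s0])
    have "prob (\<Union>i. A \<inter> B \<inter> ?X i) = prob B * prob (\<Union>i. A \<inter> ?X i)"
      using s1 s0' union(3) by (simp add: sums_unique2)
    moreover have "A \<inter> B \<inter> ((\<lambda>x. (Phi x, Y x)) -` (\<Union>i. F i) \<inter> space M) = (\<Union>i. A \<inter> B \<inter> ?X i)"
      by auto
    moreover have "A \<inter> ((\<lambda>x. (Phi x, Y x)) -` (\<Union>i. F i) \<inter> space M) = (\<Union>i. A \<inter> ?X i)"
      by auto
    ultimately show ?case by simp
  qed
qed

lemma final: "cond_indep M Epsi NQ (\<lambda>\<omega>. (Phi \<omega>, Y \<omega>)) (NF \<Otimes>\<^sub>M borel) Fp"
  unfolding cond_indep_def cond_prob_def
proof (intro ballI)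
  fix U and W :: "('f \<times> 'y) set" assume U: "U \<in> sets NQ" and W: "W \<in> sets (NF \<Otimes>\<^sub>M borel)"
  interpret P: sigma_finite_subalgebra M Fp using prob_sfs[OF prob_space_axioms subFp] .
  note [measurable] = U W Y_M
  define B where "B = Epsi -` U \<inter> space M"
  have BM[measurable]: "B \<in> sets M" unfolding B_def by measurable
  let ?X = "(\<lambda>x. (Phi x, Y x)) -` W \<inter> space M"
  have XM: "?X \<in> events" by measurable
  have ig: "integrable M (\<lambda>\<omega>. indicator W (Phi \<omega>, Y \<omega>) :: real)"
    by (rule bdd_int) (auto split: split_indicator)
  have ceB: "AE \<omega> in M. real_cond_exp M Fp (\<lambda>\<omega>. indicator U (Epsi \<omega>)) \<omega> = prob B"
  proof -
    have "AE \<omega> in M. real_cond_exp M Fp (\<lambda>\<omega>. indicator U (Epsi \<omega>)) \<omega> = real_cond_exp M Fp (indicator B) \<omega>"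
      by (rule P.real_cond_exp_cong) (auto simp: B_def split: split_indicator)
    moreover have "AE \<omega> in M. real_cond_exp M Fp (indicator B) \<omega> = prob B"
      by (rule indep_ce[OF subFp BM]) (use indepE[OF _ U] in \<open>auto simp: B_def\<close>)
    ultimately show ?thesis by auto
  qed
  have ch: "AE \<omega> in M. real_cond_exp M Fp (\<lambda>\<omega>. indicator U (Epsi \<omega>) * indicator W (Phi \<omega>, Y \<omega>)) \<omega>
      = prob B * real_cond_exp M Fp (\<lambda>\<omega>. indicator W (Phi \<omega>, Y \<omega>)) \<omega>"
  proof (rule P.real_cond_exp_charact)
    fix A assume A: "A \<in> sets Fp"
    have AM: "A \<in> events" using sets_Fp_M[OF A] .
    have "(\<integral>x\<in>A. indicator U (Epsi x) * indicator W (Phi x, Y x) \<partial>M) = prob (A \<inter> B \<inter> ?X)"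
      unfolding set_lebesgue_integral_def using AM BM XM
      by (intro int_ind) (auto simp: B_def split: split_indicator)
    also have "\<dots> = prob B * prob (A \<inter> ?X)"
      unfolding B_def by (rule dyn[OF A U W])
    also have "prob (A \<inter> ?X) = (\<integral>x\<in>A. indicator W (Phi x, Y x) \<partial>M)"
      unfolding set_lebesgue_integral_def using AM XM
      by (intro int_ind[symmetric]) (auto split: split_indicator)
    also have "\<dots> = (\<integral>x\<in>A. real_cond_exp M Fp (\<lambda>\<omega>. indicator W (Phi \<omega>, Y \<omega>)) x \<partial>M)"
      by (rule P.real_cond_exp_intA[OF ig A])
    also have "prob B * \<dots> = (\<integral>x\<in>A. prob B * real_cond_exp M Fp (\<lambda>\<omega>. indicator W (Phi \<omega>, Y \<omega>)) x \<partial>M)"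
      unfolding set_lebesgue_integral_def real_scaleR_def
      by (subst mult.left_commute) (rule integral_mult_right_zero[symmetric])
    finally show "(\<integral>x\<in>A. indicator U (Epsi x) * indicator W (Phi x, Y x) \<partial>M)
        = (\<integral>x\<in>A. prob B * real_cond_exp M Fp (\<lambda>\<omega>. indicator W (Phi \<omega>, Y \<omega>)) x \<partial>M)" .
  next
    show "integrable M (\<lambda>x. indicator U (Epsi x) * indicator W (Phi x, Y x) :: real)"
      by (rule bdd_int) (auto split: split_indicator)
    show "integrable M (\<lambda>x. prob B * real_cond_exp M Fp (\<lambda>\<omega>. indicator W (Phi \<omega>, Y \<omega>)) x)"
      using P.real_cond_exp_int(1)[OF ig] by simp
    show "(\<lambda>x. prob B * real_cond_exp M Fp (\<lambda>\<omega>. indicator W (Phi \<omega>, Y \<omega>)) x) \<in> borel_measurable Fp"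
      by measurable
  qed
  show "AE \<omega> in M. real_cond_exp M Fp (\<lambda>\<omega>. indicator U (Epsi \<omega>) * indicator W (Phi \<omega>, Y \<omega>)) \<omega>
      = real_cond_exp M Fp (\<lambda>\<omega>. indicator U (Epsi \<omega>)) \<omega> *
        real_cond_exp M Fp (\<lambda>\<omega>. indicator W (Phi \<omega>, Y \<omega>)) \<omega>"
    using ceB ch by auto
qed

end

lemma sigma_rv_le:
  assumes "Z \<in> measurable F N" "space F = space M"
  shows "sets (sigma_rv M Z N) \<subseteq> sets F"
proof -
  have "Z \<in> space M \<rightarrow> space N" using assms by (auto simp: measurable_def)
  then show ?thesis unfolding sigma_rv_def using assms
    by (auto simp: sets_vimage_algebra2 dest: measurable_sets)
qed

lemma sigma_rv_meas:
  assumes "Z \<in> measurable M N"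
  shows "Z \<in> measurable (sigma_rv M Z N) N"
  unfolding sigma_rv_def using assms by (intro measurable_vimage_algebra1) (auto simp: measurable_def)

theorem lemma1:
  fixes M :: "'a measure"
    and X :: "'a \<Rightarrow> 'x::euclidean_space"
    and Y :: "'a \<Rightarrow> 'y::euclidean_space"
    and E :: "'a \<Rightarrow> 'e::euclidean_space"
    and Phi :: "'a \<Rightarrow> 'f" and NF :: "'f measure"
    and Ephi :: "'a \<Rightarrow> 'p" and NP :: "'p measure"
    and Epsi :: "'a \<Rightarrow> 'q" and NQ :: "'q measure"
  assumes "prob_space M"
    and "X \<in> borel_measurable M" and "Y \<in> borel_measurable M" and "E \<in> borel_measurable M"
    and "Phi \<in> measurable (sigma_rv M X borel) NF"
    and "minimal_env_part M E Phi NF Ephi NP"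
    and "Epsi \<in> measurable M NQ"
    and "prob_space.indep_set M (sets (sigma_rv M Ephi NP)) (sets (sigma_rv M Epsi NQ))"
    and "sets (sigma_rv M E borel) = sets (sigma_rv M (\<lambda>\<omega>. (Ephi \<omega>, Epsi \<omega>)) (NP \<Otimes>\<^sub>M NQ))"
    and "\<exists>Psi::'a \<Rightarrow> 'f. invariant_feature M X Y E Psi NF"
    and "invariant_feature M X Y E Phi NF"
  shows "cond_indep M Epsi NQ (\<lambda>\<omega>. (Phi \<omega>, Y \<omega>)) (NF \<Otimes>\<^sub>M borel) (sigma_rv M Ephi NP)"
proof -
  interpret prob_space M by fact
  define Fp where "Fp = sigma_rv M Ephi NP"
  define FE where "FE = sigma_rv M E borel"
  define FPhi where "FPhi = sigma_rv M Phi NF"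
  define G where "G = sigma_rv M (\<lambda>\<omega>. (Phi \<omega>, E \<omega>)) (NF \<Otimes>\<^sub>M borel)"
  have subFE: "subalgebra M FE" unfolding FE_def by (rule subalg_vimage[OF assms(4)])
  have Phi_M: "Phi \<in> measurable M NF"
    using measurable_from_subalg[OF subalg_vimage[OF assms(2)] assms(5)] .
  have Ephi_FE: "Ephi \<in> measurable FE NP"
    using assms(6) unfolding minimal_env_part_def FE_def by blast
  have Ephi_M: "Ephi \<in> measurable M NP" using measurable_from_subalg[OF subFE Ephi_FE] .
  have subFp: "subalgebra M Fp" unfolding Fp_def by (rule subalg_vimage[OF Ephi_M])
  have subFPhi: "subalgebra M FPhi" unfolding FPhi_def by (rule subalg_vimage[OF Phi_M])
  have PE_M: "(\<lambda>\<omega>. (Phi \<omega>, E \<omega>)) \<in> measurable M (NF \<Otimes>\<^sub>M borel)"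
    using Phi_M assms(4) by (intro measurable_Pair)
  have subG: "subalgebra M G" unfolding G_def by (rule subalg_vimage[OF PE_M])
  have spFE: "space FE = space M" using subFE by (simp add: subalgebra_def)
  have spG: "space G = space M" using subG by (simp add: subalgebra_def)
  have Fp_FE: "sets Fp \<subseteq> sets FE" unfolding Fp_def by (rule sigma_rv_le[OF Ephi_FE spFE])
  have PE_G: "(\<lambda>\<omega>. (Phi \<omega>, E \<omega>)) \<in> measurable G (NF \<Otimes>\<^sub>M borel)"
    unfolding G_def by (rule sigma_rv_meas[OF PE_M])
  have E_G: "E \<in> measurable G borel"
    using measurable_compose[OF PE_G measurable_snd] by (simp add: comp_def)
  have Phi_G: "Phi \<in> measurable G NF"
    using measurable_compose[OF PE_G measurable_fst] by (simp add: comp_def)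
  have FE_G: "sets FE \<subseteq> sets G" unfolding FE_def by (rule sigma_rv_le[OF E_G spG])
  have Phi_FPhi: "Phi \<in> measurable FPhi NF" unfolding FPhi_def by (rule sigma_rv_meas[OF Phi_M])
  have FPhi_sets: "sets FPhi = {Phi -` S \<inter> space M | S. S \<in> sets NF}"
    unfolding FPhi_def sigma_rv_def using Phi_M
    by (intro sets_vimage_algebra2) (auto simp: measurable_def)
  have PP_M: "(\<lambda>\<omega>. (Ephi \<omega>, Epsi \<omega>)) \<in> measurable M (NP \<Otimes>\<^sub>M NQ)"
    using Ephi_M assms(7) by (intro measurable_Pair)
  have "Epsi \<in> measurable (sigma_rv M (\<lambda>\<omega>. (Ephi \<omega>, Epsi \<omega>)) (NP \<Otimes>\<^sub>M NQ)) NQ"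
    using measurable_compose[OF sigma_rv_meas[OF PP_M] measurable_snd] by (simp add: comp_def)
  then have Epsi_FE: "Epsi \<in> measurable FE NQ"
    unfolding FE_def using assms(9) by (simp cong: measurable_cong_sets)
  have minE: "\<And>S. S \<in> sets NF \<Longrightarrow> AE x in M. real_cond_exp M FE (\<lambda>x. indicator S (Phi x)) x
                 = real_cond_exp M Fp (\<lambda>x. indicator S (Phi x)) x"
    using assms(6) unfolding minimal_env_part_def same_cond_law_def cond_prob_def FE_def Fp_def
    by blast
  have invY: "\<And>T. T \<in> sets borel \<Longrightarrow> AE x in M. real_cond_exp M G (\<lambda>x. indicator T (Y x)) x
                 = real_cond_exp M FPhi (\<lambda>x. indicator T (Y x)) x"
    using assms(11) unfolding invariant_feature_def same_cond_law_def cond_prob_def G_def FPhi_def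
    by blast
  have indepE: "\<And>C U. C \<in> sets Fp \<Longrightarrow> U \<in> sets NQ \<Longrightarrow>
                 prob (C \<inter> (Epsi -` U \<inter> space M)) = prob C * prob (Epsi -` U \<inter> space M)"
  proof -
    fix C U assume "C \<in> sets Fp" "U \<in> sets NQ"
    moreover have "Epsi -` U \<inter> space M \<in> sets (sigma_rv M Epsi NQ)"
      unfolding sigma_rv_def using \<open>U \<in> sets NQ\<close> by (rule in_vimage_algebra)
    ultimately show "prob (C \<inter> (Epsi -` U \<inter> space M)) = prob C * prob (Epsi -` U \<inter> space M)"
      using indep_setD[OF assms(8)] unfolding Fp_def by blast
  qed
  interpret LL M Fp FE FPhi G Phi NF Y Epsi NQ
    by unfold_locales (fact subFp subFE subFPhi subG Fp_FE FE_G Phi_G Phi_FPhi FPhi_sets assms(3)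
        Epsi_FE minE invY indepE)+
  show ?thesis using final unfolding Fp_def .
qed

end
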